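(* Let $f=g+h$ where $g:\mathbb{R}^n\to\mathbb{R}$ is $C^1$-smooth with $L$-Lipschitz gradient and $h(x)=\lambda\|x\|_1$ for some $\lambda>0$. Let $S=\arg\min f$, let $\bar x\in S$, $I=\{i:\bar x_i=0\}$ and $\mathcal{M}=\{x:x_i=0\ \forall i\in I\}$, and fix $t>0$. If $0\in\operatorname{ri}\partial f(\bar x)$, then the following are equivalent: (i) there exist $\hat\epsilon,\hat\mu>0$ such that $\hat\mu\,\operatorname{dist}(x,S)\le\|x-\operatorname{prox}_{th}(x-t\nabla g(x))\|$ for all $x\in B_{\hat\epsilon}(\bar x)$; (ii) there exist $\epsilon,\mu>0$ such that $\mu\,\operatorname{dist}(x,S\cap\mathcal{M})\le\|\nabla_{\mathcal{M}}f(x)\|$ for all $x\in B_\epsilon(\bar x)\cap\mathcal{M}$.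
   Context: $\partial f(x)=\nabla g(x)+\lambda\partial\|\cdot\|_1(x)$; $\operatorname{ri}$ is the relative interior; $\operatorname{prox}_{th}(z)=\arg\min_y\{h(y)+\frac1{2t}\|y-z\|^2\}$. $\nabla_{\mathcal M}f(x)$ is the Riemannian gradient of the restriction $f|_{\mathcal M}$ (which is smooth near $\bar x$) with respect to the Euclidean metric on the subspace $\mathcal M$, i.e. the orthogonal projection onto $\mathcal M$ of the gradient of any local smooth extension of $f|_{\mathcal M}$. *)

theory Defs
  imports "HOL-Analysis.Analysis"
begin

definition l1norm :: "real^'n \<Rightarrow> real" where
  "l1norm x = (\<Sum>i\<in>UNIV. \<bar>x $ i\<bar>)"

definition convex_subdiff :: "(real^'n \<Rightarrow> real) \<Rightarrow> real^'n \<Rightarrow> (real^'n) set" where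
  "convex_subdiff \<phi> x = {v. \<forall>y. \<phi> y \<ge> \<phi> x + v \<bullet> (y - x)}"

definition argmin_set :: "('a \<Rightarrow> real) \<Rightarrow> 'a set" where
  "argmin_set F = {x. \<forall>y. F x \<le> F y}"

definition prox :: "real \<Rightarrow> (real^'n \<Rightarrow> real) \<Rightarrow> real^'n \<Rightarrow> real^'n" where
  "prox t h z = (THE y. \<forall>w. h y + (1 / (2 * t)) * (norm (y - z))\<^sup>2
                              \<le> h w + (1 / (2 * t)) * (norm (w - z))\<^sup>2)"

definition active_subspace :: "real^'n \<Rightarrow> (real^'n) set" where
  "active_subspace xbar = {x. \<forall>i. xbar $ i = 0 \<longrightarrow> x $ i = 0}"

definition riem_grad :: "(real^'n) set \<Rightarrow> (real^'n \<Rightarrow> real) \<Rightarrow> real^'n \<Rightarrow> real^'n" where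
  "riem_grad M F x = (THE v. v \<in> M \<and> (F has_derivative (\<lambda>d. v \<bullet> d)) (at x within M))"

end

theory Submission
  imports Defs
begin


definition soft :: "real \<Rightarrow> real \<Rightarrow> real" where
  "soft a z = (if a < z then z - a else if z < -a then z + a else 0)"

lemma soft_ineq:
  assumes "a \<ge> 0"
  shows "2*a*\<bar>soft a z\<bar> + (soft a z - z)^2 + (y - soft a z)^2 \<le> 2*a*\<bar>y\<bar> + (y - z)^2"
proof -
  have e: "(y - z)^2 = (y - soft a z)^2 + 2*(y - soft a z)*(soft a z - z) + (soft a z - z)^2"
    by (simp add: power2_eq_square algebra_simps)
  have "a*\<bar>soft a z\<bar> - (y - soft a z)*(soft a z - z) \<le> a*\<bar>y\<bar>"
  proof (cases "a < z")
    case True then show ?thesis using assms by (auto simp: soft_def abs_if algebra_simps intro: mult_nonneg_nonpos)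
  next
    case False
    show ?thesis
    proof (cases "z < -a")
      case True then show ?thesis using assms False by (auto simp: soft_def abs_if algebra_simps intro: mult_nonneg_nonpos mult_nonneg_nonneg)
    next
      case F2: False
      have "y * z \<le> \<bar>y\<bar> * a"
      proof -
        have "\<bar>y*z\<bar> \<le> \<bar>y\<bar>*a" using False F2 by (simp add: abs_mult mult_left_mono)
        then show ?thesis by linarith
      qed
      then show ?thesis using False F2 by (simp add: soft_def algebra_simps)
    qed
  qed
  then show ?thesis using e by linarith
qed

lemma norm_sq_vec: "(norm (v::real^'n))^2 = (\<Sum>i\<in>UNIV. (v$i)^2)"
  unfolding power2_norm_eq_inner inner_vec_def by (simp add: power2_eq_square)

lemma prox_eq:
  assumes t: "t > 0" and lam: "lam > 0"
  shows "prox t (\<lambda>y. lam * l1norm y) z = (\<chi> i. soft (t*lam) (z$i))"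
proof -
  define p where "p = (\<chi> i. soft (t*lam) (z$i))"
  define \<Phi> where "\<Phi> = (\<lambda>y::real^'a. lam * l1norm y + (1 / (2 * t)) * (norm (y - z))\<^sup>2)"
  have key: "\<Phi> p + (1/(2*t)) * (norm (y - p))^2 \<le> \<Phi> y" for y
  proof -
    have "2*t*(\<Phi> p + (1/(2*t)) * (norm (y - p))^2) = (\<Sum>i\<in>UNIV. 2*(t*lam)*\<bar>p$i\<bar> + (p$i - z$i)^2 + (y$i - p$i)^2)"
      using t by (simp add: \<Phi>_def l1norm_def norm_sq_vec sum.distrib sum_distrib_left algebra_simps)
    also have "\<dots> \<le> (\<Sum>i\<in>UNIV. 2*(t*lam)*\<bar>y$i\<bar> + (y$i - z$i)^2)"
      by (rule sum_mono) (use soft_ineq[of "t*lam"] t lam in \<open>auto simp: p_def\<close>)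
    also have "\<dots> = 2*t*\<Phi> y"
      using t by (simp add: \<Phi>_def l1norm_def norm_sq_vec sum.distrib sum_distrib_left algebra_simps)
    finally show ?thesis using t by simp
  qed
  have "(THE y. \<forall>w. \<Phi> y \<le> \<Phi> w) = p"
  proof (rule the_equality)
    show "\<forall>w. \<Phi> p \<le> \<Phi> w" using key t by (smt (verit) divide_pos_pos zero_le_power2 mult_nonneg_nonneg)
    fix q assume "\<forall>w. \<Phi> q \<le> \<Phi> w"
    then have "\<Phi> q \<le> \<Phi> p" by blast
    with key[of q] have "(1/(2*t)) * (norm (q - p))^2 \<le> 0" by linarith
    then have "(norm (q - p))^2 / (2*t) \<le> 0" by simp
    then have "(norm (q - p))^2 \<le> 0" using t by (simp add: divide_le_0_iff)
    then have "norm (q - p) = 0" by (metis power2_less_eq_zero_iff antisym zero_le_power2 power_zero_numeral zero_less_power2 norm_eq_zero)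
    then show "q = p" by simp
  qed
  then show ?thesis unfolding prox_def \<Phi>_def p_def by simp
qed



lemma l1_line:
  fixes y :: "real^'n"
  assumes "\<bar>s\<bar> < \<bar>y$i\<bar>"
  shows "l1norm (y + s *\<^sub>R axis i 1) = l1norm y + sgn (y$i) * s"
proof -
  have "l1norm (y + s *\<^sub>R axis i 1) = (\<Sum>j\<in>UNIV. \<bar>y$j\<bar> + (if j = i then sgn (y$i) * s else 0))"
    unfolding l1norm_def
  proof (rule sum.cong)
    fix j
    show "\<bar>(y + s *\<^sub>R axis i 1) $ j\<bar> = \<bar>y$j\<bar> + (if j = i then sgn (y$i) * s else 0)"
      using assms by (cases "j = i") (auto simp: axis_def sgn_if abs_if)
  qed simp
  also have "\<dots> = l1norm y + sgn (y$i) * s"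
    by (simp add: sum.distrib l1norm_def)
  finally show ?thesis .
qed

lemma fermat:
  fixes g :: "real^'n \<Rightarrow> real" and G :: "real^'n \<Rightarrow> real^'n"
  assumes grad: "\<forall>x. (g has_derivative (\<lambda>d. G x \<bullet> d)) (at x)"
    and y: "y \<in> argmin_set (\<lambda>x. g x + lam * l1norm x)" and yi: "y$i \<noteq> 0"
  shows "G y $ i + lam * sgn (y$i) = 0"
proof -
  define e :: "real^'n" where "e = axis i 1"
  define \<phi> where "\<phi> = (\<lambda>s. g (y + s *\<^sub>R e) + lam * (l1norm y + sgn (y$i) * s))"
  have d1: "((\<lambda>s::real. y + s *\<^sub>R e) has_derivative (\<lambda>s. s *\<^sub>R e)) (at 0)"
    by (auto intro!: derivative_eq_intros)
  have d2: "(g has_derivative (\<lambda>d. G y \<bullet> d)) (at (y + 0 *\<^sub>R e))" using grad by simp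
  have d3: "((\<lambda>s. g (y + s *\<^sub>R e)) has_derivative (\<lambda>s. G y \<bullet> (s *\<^sub>R e))) (at 0)"
    using has_derivative_compose[OF d1 d2] by simp
  have "(\<lambda>s. G y \<bullet> (s *\<^sub>R e)) = (*) (G y $ i)"
    by (auto simp: e_def inner_axis)
  with d3 have d4: "((\<lambda>s. g (y + s *\<^sub>R e)) has_real_derivative (G y $ i)) (at 0)"
    by (simp add: has_field_derivative_def)
  have d5: "(\<phi> has_real_derivative (G y $ i + lam * sgn (y$i))) (at 0)"
    unfolding \<phi>_def by (auto intro!: derivative_eq_intros d4)
  show ?thesis
  proof (rule DERIV_local_min[OF d5, of "\<bar>y$i\<bar>"])
    show "0 < \<bar>y$i\<bar>" using yi by simp
    show "\<forall>s. \<bar>0 - s\<bar> < \<bar>y $ i\<bar> \<longrightarrow> \<phi> 0 \<le> \<phi> s"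
    proof (intro allI impI)
      fix s :: real assume "\<bar>0 - s\<bar> < \<bar>y $ i\<bar>"
      then have "l1norm (y + s *\<^sub>R e) = l1norm y + sgn (y$i) * s"
        unfolding e_def by (intro l1_line) simp
      moreover have "g y + lam * l1norm y \<le> g (y + s *\<^sub>R e) + lam * l1norm (y + s *\<^sub>R e)"
        using y by (auto simp: argmin_set_def)
      ultimately show "\<phi> 0 \<le> \<phi> s" by (simp add: \<phi>_def)
    qed
  qed
qed



lemma l1_triangle: "l1norm (x + y) \<le> l1norm x + l1norm y"
  unfolding l1norm_def by (simp add: sum.distrib[symmetric] sum_mono abs_triangle_ineq)

lemma l1_axis: "l1norm (axis j (1::real) :: real^'n) = 1"
proof -
  have eq: "(\<lambda>k. \<bar>(axis j (1::real) :: real^'n) $ k\<bar>) = (\<lambda>k. if k = j then 1 else 0)"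
    by (auto simp: axis_def)
  show ?thesis unfolding l1norm_def eq by simp
qed

lemma l1_uminus: "l1norm (- x) = l1norm x"
  unfolding l1norm_def by simp

lemma l1_zero: "l1norm 0 = 0" unfolding l1norm_def by simp

lemma l1_scale2: "l1norm (2 *\<^sub>R x) = 2 * l1norm x"
  unfolding l1norm_def by (simp add: abs_mult sum_distrib_left)

lemma inner_le_l1:
  fixes v y :: "real^'n"
  assumes "\<forall>j. \<bar>v$j\<bar> \<le> 1"
  shows "v \<bullet> y \<le> l1norm y"
  unfolding inner_vec_def l1norm_def
proof (rule sum_mono)
  fix j
  have "v$j * y$j \<le> \<bar>v$j\<bar> * \<bar>y$j\<bar>" by (metis abs_ge_self abs_mult)
  also have "\<dots> \<le> \<bar>y$j\<bar>" using assms mult_right_mono[of "\<bar>v$j\<bar>" 1 "\<bar>y$j\<bar>"] by simp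
  finally show "v $ j \<bullet> y $ j \<le> \<bar>y $ j\<bar>" by simp
qed

lemma subdiff_char:
  "v \<in> convex_subdiff l1norm x \<longleftrightarrow> v \<bullet> x = l1norm x \<and> (\<forall>j. \<bar>v$j\<bar> \<le> 1)"
proof
  assume v: "v \<in> convex_subdiff l1norm x"
  then have h: "l1norm y \<ge> l1norm x + v \<bullet> (y - x)" for y
    by (simp add: convex_subdiff_def)
  have "v \<bullet> x \<ge> l1norm x" using h[of 0] by (simp add: l1_zero)
  moreover have "v \<bullet> x \<le> l1norm x" using h[of "2 *\<^sub>R x"]
    by (simp add: l1_scale2 algebra_simps inner_diff_right)
  moreover have "\<bar>v$j\<bar> \<le> 1" for j
  proof -
    have a: "l1norm (x + axis j 1) \<le> l1norm x + 1" using l1_triangle[of x "axis j 1"] l1_axis[of j] by simp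
    have b: "l1norm (x + - axis j 1) \<le> l1norm x + 1" using l1_triangle[of x "- axis j 1"] l1_axis[of j] l1_uminus[of "axis j 1"] by simp
    have "v$j \<le> 1" using h[of "x + axis j 1"] a by (simp add: inner_axis)
    moreover have "- v$j \<le> 1" using h[of "x + - axis j 1"] b by (simp add: inner_axis)
    ultimately show ?thesis by linarith
  qed
  ultimately show "v \<bullet> x = l1norm x \<and> (\<forall>j. \<bar>v$j\<bar> \<le> 1)" by auto
next
  assume a: "v \<bullet> x = l1norm x \<and> (\<forall>j. \<bar>v$j\<bar> \<le> 1)"
  show "v \<in> convex_subdiff l1norm x"
    unfolding convex_subdiff_def using a inner_le_l1[of v] by (auto simp: inner_diff_right)
qed


lemma ri_strict:
  fixes Gx x :: "real^'n"
  assumes ri: "0 \<in> rel_interior ((\<lambda>v. Gx + lam *\<^sub>R v) ` convex_subdiff l1norm x)"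
    and lam: "lam > 0" and xi: "x$i = 0"
  shows "\<bar>Gx$i\<bar> < lam"
proof -
  define K where "K = convex_subdiff l1norm x"
  define T where "T = (\<lambda>v. Gx + lam *\<^sub>R v) ` K"
  have "0 \<in> rel_interior T" using ri by (simp add: T_def K_def)
  then have "0 \<in> T \<and> (\<exists>e. e > 0 \<and> ball 0 e \<inter> affine hull T \<subseteq> T)"
    by (rule mem_rel_interior_ball[THEN iffD1])
  then obtain e where e: "e > 0" "ball 0 e \<inter> affine hull T \<subseteq> T" and T0: "0 \<in> T"
    by blast
  from T0 obtain w where w: "w \<in> K" "Gx + lam *\<^sub>R w = 0" unfolding T_def by auto
  have wc: "w \<bullet> x = l1norm x \<and> (\<forall>j. \<bar>w$j\<bar> \<le> 1)"
    using w(1) unfolding K_def by (rule subdiff_char[THEN iffD1])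
  have wj: "Gx$j + lam * w$j = 0" for j
  proof -
    have "(Gx + lam *\<^sub>R w)$j = 0" using w(2) by simp
    then show ?thesis by simp
  qed
  have pa: "(lam * (a - w$i)) *\<^sub>R axis i 1 \<in> T" if "\<bar>a\<bar> \<le> 1" for a
  proof -
    define w' where "w' = (\<chi> j. if j = i then a else w$j)"
    have "w' \<bullet> x = w \<bullet> x" unfolding inner_vec_def w'_def
      by (rule sum.cong) (auto simp: xi)
    moreover have "\<forall>j. \<bar>w'$j\<bar> \<le> 1" using wc that by (auto simp: w'_def)
    ultimately have "w' \<in> K" using wc unfolding K_def by (simp add: subdiff_char)
    moreover have "(lam * (a - w$i)) *\<^sub>R axis i 1 = Gx + lam *\<^sub>R w'"
      unfolding vec_eq_iff
    proof
      fix j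
      show "((lam * (a - w$i)) *\<^sub>R axis i 1) $ j = (Gx + lam *\<^sub>R w') $ j"
        using wj[of j] wj[of i] by (cases "j = i") (simp_all add: w'_def axis_def algebra_simps)
    qed
    ultimately show ?thesis unfolding T_def by (rule rev_image_eqI)
  qed
  obtain c where c: "c \<noteq> 0" "c *\<^sub>R axis i 1 \<in> T"
  proof (cases "w$i = 1")
    case True
    then show ?thesis using that[of "lam * (-1 - w$i)"] pa[of "-1"] lam by simp
  next
    case False
    then show ?thesis using that[of "lam * (1 - w$i)"] pa[of "1"] lam by simp
  qed
  have line: "r *\<^sub>R axis i 1 \<in> T" if "\<bar>r\<bar> < e" for r
  proof -
    have aff: "affine (affine hull T)" by simp
    have "(1 - r/c) *\<^sub>R 0 + (r/c) *\<^sub>R (c *\<^sub>R axis i 1) \<in> affine hull T"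
      by (rule mem_affine[OF aff]) (use T0 c hull_inc in auto)
    then have "r *\<^sub>R axis i 1 \<in> affine hull T" using c by simp
    moreover have "r *\<^sub>R axis i (1::real) \<in> ball 0 e" using that by (simp only: mem_ball dist_0_norm norm_scaleR norm_axis_1)
    ultimately show ?thesis using e by blast
  qed
  have comp: "\<exists>v. \<bar>v\<bar> \<le> 1 \<and> r = Gx$i + lam * v" if "\<bar>r\<bar> < e" for r
  proof -
    from line[OF that] obtain v where v: "v \<in> K" "r *\<^sub>R axis i 1 = Gx + lam *\<^sub>R v"
      unfolding T_def by blast
    have "(r *\<^sub>R axis i 1) $ i = (Gx + lam *\<^sub>R v) $ i" using v(2) by simp
    then have "r = Gx$i + lam * v$i" by (simp add: axis_def)
    moreover have "\<bar>v$i\<bar> \<le> 1" using v(1) unfolding K_def by (simp add: subdiff_char)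
    ultimately show ?thesis by blast
  qed
  obtain v1 where v1: "\<bar>v1\<bar> \<le> 1" "e/2 = Gx$i + lam * v1" using comp[of "e/2"] e by auto
  obtain v2 where v2: "\<bar>v2\<bar> \<le> 1" "-e/2 = Gx$i + lam * v2" using comp[of "-e/2"] e by auto
  have "lam * v1 \<le> lam" using v1 lam by (simp add: mult_left_le abs_le_iff)
  moreover have "lam * (-v2) \<le> lam" using v2 lam by (intro mult_left_le) (auto simp: abs_le_iff)
  ultimately
  show ?thesis using v1 v2 e by linarith
qed


lemma subspace_active: "subspace (active_subspace xbar)"
  unfolding subspace_def active_subspace_def by auto

lemma deriv_within_subspace_unique:
  fixes F :: "real^'n \<Rightarrow> real"
  assumes M: "subspace M" and y: "y \<in> M" and vw: "v \<in> M" "w \<in> M"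
    and dv: "(F has_derivative (\<lambda>d. v \<bullet> d)) (at y within M)"
    and dw: "(F has_derivative (\<lambda>d. w \<bullet> d)) (at y within M)"
  shows "v = w"
proof -
  define u where "u = v - w"
  have uM: "u \<in> M" using vw M by (simp add: u_def subspace_diff)
  define \<psi> where "\<psi> = (\<lambda>s::real. y + s *\<^sub>R u)"
  have img: "\<psi> ` UNIV \<subseteq> M" using M y uM by (auto simp: \<psi>_def subspace_add subspace_scale)
  have d\<psi>: "(\<psi> has_derivative (\<lambda>s. s *\<^sub>R u)) (at 0 within UNIV)"
    unfolding \<psi>_def by (auto intro!: derivative_eq_intros)
  have \<psi>0: "\<psi> 0 = y" by (simp add: \<psi>_def)
  have c1: "((F \<circ> \<psi>) has_derivative ((\<lambda>d. v \<bullet> d) \<circ> (\<lambda>s. s *\<^sub>R u))) (at 0)"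
    using diff_chain_within[OF d\<psi>, of F] has_derivative_subset[OF dv img] \<psi>0 by simp
  have c2: "((F \<circ> \<psi>) has_derivative ((\<lambda>d. w \<bullet> d) \<circ> (\<lambda>s. s *\<^sub>R u))) (at 0)"
    using diff_chain_within[OF d\<psi>, of F] has_derivative_subset[OF dw img] \<psi>0 by simp
  have "((\<lambda>d. v \<bullet> d) \<circ> (\<lambda>s. s *\<^sub>R u)) = ((\<lambda>d. w \<bullet> d) \<circ> (\<lambda>s. s *\<^sub>R u))"
    by (rule has_derivative_unique[OF c1 c2])
  then have "v \<bullet> u = w \<bullet> u" by (metis comp_apply scaleR_one)
  then have "u \<bullet> u = 0" by (simp add: u_def inner_diff_left)
  then show ?thesis by (simp add: u_def)
qed

lemma riem_grad_eq:
  fixes g :: "real^'n \<Rightarrow> real" and G :: "real^'n \<Rightarrow> real^'n" and xbar y :: "real^'n"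
  assumes grad: "\<forall>x. (g has_derivative (\<lambda>d. G x \<bullet> d)) (at x)"
    and U: "\<forall>z \<in> ball xbar \<delta> \<inter> active_subspace xbar.
              l1norm z = (\<chi> i. if xbar$i = 0 then 0 else sgn (xbar$i)) \<bullet> z"
    and y: "y \<in> ball xbar \<delta> \<inter> active_subspace xbar"
  shows "riem_grad (active_subspace xbar) (\<lambda>x. g x + lam * l1norm x) y
         = (\<chi> i. if xbar$i = 0 then 0 else G y $ i + lam * sgn (xbar$i))"
proof -
  define M where "M = active_subspace xbar"
  define \<sigma> :: "real^'n" where "\<sigma> = (\<chi> i. if xbar$i = 0 then 0 else sgn (xbar$i))"
  define P :: "real^'n \<Rightarrow> real^'n" where "P = (\<lambda>z. \<chi> i. if xbar$i = 0 then 0 else z$i)"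
  define v where "v = (\<chi> i. if xbar$i = 0 then 0 else G y $ i + lam * sgn (xbar$i))"
  define F where "F = (\<lambda>x. g x + lam * l1norm x)"
  have blP: "bounded_linear P"
  proof (rule bounded_linear_intro[where K=1])
    show "P (a + b) = P a + P b" for a b by (auto simp: P_def vec_eq_iff)
    show "P (r *\<^sub>R a) = r *\<^sub>R P a" for r a by (auto simp: P_def vec_eq_iff)
    show "norm (P a) \<le> norm a * 1" for a
      by simp (rule norm_le_componentwise_cart, auto simp: P_def)
  qed
  have PM: "P z = z" if "z \<in> M" for z using that by (auto simp: P_def M_def active_subspace_def vec_eq_iff)
  have yM: "y \<in> M" using y by (simp add: M_def)
  have vM: "v \<in> M" by (simp add: v_def M_def active_subspace_def)
  have lin: "(\<lambda>d. G y \<bullet> P d + lam * (\<sigma> \<bullet> d)) = (\<lambda>d. v \<bullet> d)"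
  proof
    fix d
    show "G y \<bullet> P d + lam * (\<sigma> \<bullet> d) = v \<bullet> d"
      unfolding inner_vec_def sum_distrib_left sum.distrib[symmetric]
      by (rule sum.cong) (auto simp: P_def \<sigma>_def v_def algebra_simps)
  qed
  define H where "H = (\<lambda>z. g (P z) + lam * (\<sigma> \<bullet> z))"
  have dgP: "((\<lambda>z. g (P z)) has_derivative (\<lambda>d. G y \<bullet> P d)) (at y)"
  proof -
    have "(g has_derivative (\<lambda>d. G y \<bullet> d)) (at (P y))" using grad PM[OF yM] by simp
    from has_derivative_compose[OF bounded_linear_imp_has_derivative[OF blP, of "at y"] this] show ?thesis .
  qed
  have dH: "(H has_derivative (\<lambda>d. G y \<bullet> P d + lam * (\<sigma> \<bullet> d))) (at y)"
    unfolding H_def by (auto intro!: derivative_eq_intros dgP)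
  have dHw: "(H has_derivative (\<lambda>d. v \<bullet> d)) (at y within M)"
    using has_derivative_at_withinI[OF dH] lin by simp
  have dF: "(F has_derivative (\<lambda>d. v \<bullet> d)) (at y within M)"
  proof (rule has_derivative_transform_within[OF dHw])
    show "0 < \<delta> - dist y xbar" using y by (simp add: dist_commute)
    show "y \<in> M" by (rule yM)
    fix z assume z: "z \<in> M" "dist z y < \<delta> - dist y xbar"
    then have "z \<in> ball xbar \<delta>" by (smt (verit) dist_commute dist_triangle mem_ball)
    then have "l1norm z = \<sigma> \<bullet> z" using U z(1) by (auto simp: \<sigma>_def M_def)
    then show "H z = F z" using PM[OF z(1)] by (simp add: H_def F_def)
  qed
  have "riem_grad M F y = v"
    unfolding riem_grad_def
  proof (rule the_equality)
    show "v \<in> M \<and> (F has_derivative (\<lambda>d. v \<bullet> d)) (at y within M)" using vM dF by simp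
    fix w assume "w \<in> M \<and> (F has_derivative (\<lambda>d. w \<bullet> d)) (at y within M)"
    then show "w = v" using deriv_within_subspace_unique[OF _ yM _ vM, of w F] dF
      subspace_active[of xbar] by (auto simp: M_def)
  qed
  then show ?thesis by (simp add: M_def F_def v_def)
qed


lemma l1_cont: "continuous_on UNIV (l1norm :: real^'n \<Rightarrow> real)"
  unfolding l1norm_def by (intro continuous_intros)

lemma G_tendsto:
  fixes G :: "real^'n \<Rightarrow> real^'n"
  assumes lip: "\<forall>x y. norm (G x - G y) \<le> L * norm (x - y)"
  shows "(G \<longlongrightarrow> G x) (nhds x)"
proof -
  have "((\<lambda>z. G z - G x) \<longlongrightarrow> 0) (nhds x)"
  proof (rule Lim_null_comparison)
    show "\<forall>\<^sub>F z in nhds x. norm (G z - G x) \<le> L * norm (z - x)" using lip by simp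
    have "((\<lambda>z. L * norm (z - x)) \<longlongrightarrow> L * norm (x - x)) (nhds x)"
      by (intro tendsto_intros filterlim_ident)
    then show "((\<lambda>z. L * norm (z - x)) \<longlongrightarrow> 0) (nhds x)" by simp
  qed
  then show ?thesis by (rule LIM_zero_cancel)
qed

lemma S_closed:
  fixes g :: "real^'n \<Rightarrow> real" and G :: "real^'n \<Rightarrow> real^'n"
  assumes grad: "\<forall>x. (g has_derivative (\<lambda>d. G x \<bullet> d)) (at x)"
  shows "closed (argmin_set (\<lambda>x. g x + lam * l1norm x))"
proof -
  have cg: "continuous_on UNIV g"
    using grad has_derivative_continuous continuous_at_imp_continuous_on by blast
  have cF: "continuous_on UNIV (\<lambda>x. g x + lam * l1norm x)"
    using cg l1_cont by (intro continuous_intros) auto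
  show ?thesis unfolding argmin_set_def
    by (intro closed_Collect_all closed_Collect_le cF continuous_on_const)
qed



theorem theorem5:
  fixes g :: "real^'n \<Rightarrow> real" and G :: "real^'n \<Rightarrow> real^'n"
    and L lam t :: real and xbar :: "real^'n"
  assumes grad: "\<forall>x. (g has_derivative (\<lambda>d. G x \<bullet> d)) (at x)"
    and lip: "\<forall>x y. norm (G x - G y) \<le> L * norm (x - y)"
    and lam: "lam > 0"
    and t: "t > 0"
    and xbar: "xbar \<in> argmin_set (\<lambda>x. g x + lam * l1norm x)"
    and ri: "0 \<in> rel_interior ((\<lambda>v. G xbar + lam *\<^sub>R v) ` convex_subdiff l1norm xbar)"
  shows "(\<exists>\<epsilon> \<mu>. \<epsilon> > 0 \<and> \<mu> > 0 \<and>
            (\<forall>x\<in>ball xbar \<epsilon>.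
               \<mu> * infdist x (argmin_set (\<lambda>x. g x + lam * l1norm x))
                 \<le> norm (x - prox t (\<lambda>y. lam * l1norm y) (x - t *\<^sub>R G x))))
     \<longleftrightarrow>
         (\<exists>\<epsilon> \<mu>. \<epsilon> > 0 \<and> \<mu> > 0 \<and>
            (\<forall>x\<in>ball xbar \<epsilon> \<inter> active_subspace xbar.
               \<mu> * infdist x (argmin_set (\<lambda>x. g x + lam * l1norm x) \<inter> active_subspace xbar)
                 \<le> norm (riem_grad (active_subspace xbar) (\<lambda>x. g x + lam * l1norm x) x)))"
proof -
  define S where "S = argmin_set (\<lambda>x. g x + lam * l1norm x)"
  define M where "M = active_subspace xbar"
  define R where "R = (\<lambda>x. x - prox t (\<lambda>y. lam * l1norm y) (x - t *\<^sub>R G x))"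
  define \<sigma> :: "real^'n" where "\<sigma> = (\<chi> i. if xbar$i = 0 then 0 else sgn (xbar$i))"
  define V where "V = (\<lambda>y. (\<chi> i. if xbar$i = 0 then 0 else G y $ i + lam * sgn (xbar$i)) :: real^'n)"
  have K1: "G xbar $ i = - lam * sgn (xbar$i)" if "xbar$i \<noteq> 0" for i
    using fermat[OF grad xbar that] by simp
  have K2: "\<bar>G xbar $ i\<bar> < lam" if "xbar$i = 0" for i
    using ri_strict[OF ri lam that] .
  have Gt: "(G \<longlongrightarrow> G xbar) (nhds xbar)" by (rule G_tendsto[OF lip])
  have Gti: "((\<lambda>z. G z $ i) \<longlongrightarrow> G xbar $ i) (nhds xbar)" for i
    by (rule tendsto_vec_nth[OF Gt])
  have xti: "((\<lambda>z. z $ i) \<longlongrightarrow> xbar $ i) (nhds xbar)" for i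
    by (rule tendsto_vec_nth[OF filterlim_ident])
  define Cond where "Cond = (\<lambda>i z.
     (xbar$i = 0 \<longrightarrow> \<bar>G z $ i\<bar> < lam \<and> \<bar>z$i - t * G z $ i\<bar> < t*lam) \<and>
     (xbar$i \<noteq> 0 \<longrightarrow> sgn (xbar$i) * z$i > 0 \<and> sgn (xbar$i) * (z$i - t * G z $ i) > t*lam))"
  have ev: "\<forall>\<^sub>F z in nhds xbar. Cond i z" for i
  proof (cases "xbar$i = 0")
    case True
    have e1: "\<forall>\<^sub>F z in nhds xbar. \<bar>G z $ i\<bar> < lam"
      using order_tendstoD(2)[OF tendsto_rabs[OF Gti[of i]] K2[OF True]] .
    have "((\<lambda>z. \<bar>z$i - t * G z $ i\<bar>) \<longlongrightarrow> \<bar>xbar$i - t * G xbar $ i\<bar>) (nhds xbar)"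
      by (intro tendsto_intros xti Gti)
    moreover have "\<bar>xbar$i - t * G xbar $ i\<bar> < t * lam"
      using True K2[OF True] t by (simp add: abs_mult)
    ultimately have e2: "\<forall>\<^sub>F z in nhds xbar. \<bar>z$i - t * G z $ i\<bar> < t*lam"
      by (rule order_tendstoD(2))
    show ?thesis using eventually_conj[OF e1 e2] True by (simp add: Cond_def)
  next
    case False
    have sg: "sgn (xbar$i) * sgn (xbar$i) = 1" "sgn (xbar$i) * xbar$i = \<bar>xbar$i\<bar>"
      using False by (auto simp: sgn_if)
    have "((\<lambda>z. sgn (xbar$i) * z$i) \<longlongrightarrow> sgn (xbar$i) * xbar$i) (nhds xbar)"
      by (intro tendsto_intros xti)
    moreover have "0 < sgn (xbar$i) * xbar$i" using sg False by simp
    ultimately have e1: "\<forall>\<^sub>F z in nhds xbar. 0 < sgn (xbar$i) * z$i"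
      by (rule order_tendstoD(1))
    have "((\<lambda>z. sgn (xbar$i) * (z$i - t * G z $ i)) \<longlongrightarrow> sgn (xbar$i) * (xbar$i - t * G xbar $ i)) (nhds xbar)"
      by (intro tendsto_intros xti Gti)
    moreover have "sgn (xbar$i) * (xbar$i - t * G xbar $ i) = \<bar>xbar$i\<bar> + t * lam"
      using K1[OF False] sg by (simp add: algebra_simps)
    moreover have "t * lam < \<bar>xbar$i\<bar> + t * lam" using False by simp
    ultimately have e2: "\<forall>\<^sub>F z in nhds xbar. t * lam < sgn (xbar$i) * (z$i - t * G z $ i)"
      using order_tendstoD(1) by metis
    show ?thesis using eventually_conj[OF e1 e2] False by (simp add: Cond_def)
  qed
  have "\<forall>\<^sub>F z in nhds xbar. \<forall>i. Cond i z"
    by (rule eventually_all_finite) (rule ev)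
  then obtain \<delta> where \<delta>: "\<delta> > 0" "\<And>z. dist z xbar < \<delta> \<Longrightarrow> \<forall>i. Cond i z"
    unfolding eventually_nhds_metric by blast
  have CB: "Cond i z" if "z \<in> ball xbar \<delta>" for i z
    using \<delta>(2)[of z] that by (simp add: dist_commute)
  have U: "\<forall>z \<in> ball xbar \<delta> \<inter> active_subspace xbar.
              l1norm z = (\<chi> i. if xbar$i = 0 then 0 else sgn (xbar$i)) \<bullet> z"
  proof
    fix z assume z: "z \<in> ball xbar \<delta> \<inter> active_subspace xbar"
    show "l1norm z = (\<chi> i. if xbar$i = 0 then 0 else sgn (xbar$i)) \<bullet> z"
      unfolding l1norm_def inner_vec_def
    proof (rule sum.cong)
      fix i
      show "\<bar>z $ i\<bar> = (\<chi> i. if xbar $ i = 0 then 0 else sgn (xbar $ i)) $ i \<bullet> z $ i"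
      proof (cases "xbar$i = 0")
        case True then show ?thesis using z by (simp add: active_subspace_def)
      next
        case False
        then have "sgn (xbar$i) * z$i > 0" using CB[of z i] z by (simp add: Cond_def)
        then show ?thesis using False by (auto simp: sgn_if abs_if)
      qed
    qed simp
  qed
  have SM: "s \<in> M" if "s \<in> S" "s \<in> ball xbar \<delta>" for s
    unfolding M_def active_subspace_def mem_Collect_eq
  proof (intro allI impI, rule ccontr)
    fix i assume i: "xbar$i = 0" "s$i \<noteq> 0"
    have "G s $ i + lam * sgn (s$i) = 0" using fermat[OF grad _ i(2)] that by (simp add: S_def)
    then have "\<bar>G s $ i\<bar> = lam" using i lam by (cases "s$i > 0") (auto simp: sgn_if)
    moreover have "\<bar>G s $ i\<bar> < lam" using CB[OF that(2), of i] i by (simp add: Cond_def)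
    ultimately show False by simp
  qed
  have Rform: "R z = (\<chi> i. if xbar$i = 0 then z$i else t * (G z $ i + lam * sgn (xbar$i)))"
    if "z \<in> ball xbar \<delta>" for z
    unfolding R_def prox_eq[OF t lam] vec_eq_iff
  proof
    fix i
    show "(z - (\<chi> i. soft (t * lam) ((z - t *\<^sub>R G z) $ i))) $ i =
          (\<chi> i. if xbar$i = 0 then z$i else t * (G z $ i + lam * sgn (xbar$i))) $ i"
    proof -
      have tl: "t * lam > 0" using t lam by simp
      have c: "Cond i z" using CB[OF that, of i] .
      consider "xbar$i = 0" | "xbar$i > 0" | "xbar$i < 0" by linarith
      then show ?thesis
      proof cases
        case 1 then show ?thesis using c tl by (simp add: Cond_def soft_def abs_less_iff)
      next
        case 2 then show ?thesis using c tl by (simp add: Cond_def soft_def algebra_simps)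
      next
        case 3 then show ?thesis using c tl by (simp add: Cond_def soft_def algebra_simps)
      qed
    qed
  qed
  have RG: "riem_grad M (\<lambda>x. g x + lam * l1norm x) y = V y" if "y \<in> ball xbar \<delta> \<inter> M" for y
    unfolding M_def V_def by (rule riem_grad_eq[OF grad U]) (use that in \<open>simp add: M_def\<close>)
  have Scl: "closed S" unfolding S_def by (rule S_closed[OF grad])
  have xS: "xbar \<in> S" using xbar by (simp add: S_def)
  have xM: "xbar \<in> M" by (simp add: M_def active_subspace_def)
  have main: "(\<exists>\<epsilon> \<mu>. \<epsilon> > 0 \<and> \<mu> > 0 \<and> (\<forall>x\<in>ball xbar \<epsilon>. \<mu> * infdist x S \<le> norm (R x)))
    \<longleftrightarrow> (\<exists>\<epsilon> \<mu>. \<epsilon> > 0 \<and> \<mu> > 0 \<and> (\<forall>x\<in>ball xbar \<epsilon> \<inter> M.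
               \<mu> * infdist x (S \<inter> M) \<le> norm (riem_grad M (\<lambda>x. g x + lam * l1norm x) x)))"
  proof
    assume "\<exists>\<epsilon> \<mu>. \<epsilon> > 0 \<and> \<mu> > 0 \<and> (\<forall>x\<in>ball xbar \<epsilon>. \<mu> * infdist x S \<le> norm (R x))"
    then obtain \<epsilon>1 \<mu>1 where e1: "\<epsilon>1 > 0" "\<mu>1 > 0" "\<forall>x\<in>ball xbar \<epsilon>1. \<mu>1 * infdist x S \<le> norm (R x)"
      by blast
    show "\<exists>\<epsilon> \<mu>. \<epsilon> > 0 \<and> \<mu> > 0 \<and> (\<forall>x\<in>ball xbar \<epsilon> \<inter> M.
               \<mu> * infdist x (S \<inter> M) \<le> norm (riem_grad M (\<lambda>x. g x + lam * l1norm x) x))"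
    proof (intro exI conjI ballI)
      show "min \<epsilon>1 (\<delta>/2) > 0" using e1 \<delta> by simp
      show "\<mu>1 / t > 0" using e1 t by simp
      fix x assume x: "x \<in> ball xbar (min \<epsilon>1 (\<delta>/2)) \<inter> M"
      have xd: "x \<in> ball xbar \<delta>" using x \<delta> by auto
      obtain s where s: "s \<in> S" "infdist x S = dist x s"
        using infdist_attains_inf[OF Scl, of x] xS by blast
      have "dist x s \<le> dist x xbar" using infdist_le[OF xS, of x] s by simp
      then have "dist xbar s < \<delta>" using x dist_triangle[of xbar s x]
        by (auto simp: dist_commute)
      then have "s \<in> M" using SM[OF s(1)] by simp
      then have i1: "infdist x (S \<inter> M) \<le> infdist x S" using s infdist_le[of s "S \<inter> M" x] by simp
      have "R x = t *\<^sub>R V x"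
        unfolding Rform[OF xd] V_def vec_eq_iff
        using x by (auto simp: M_def active_subspace_def)
      then have nR: "norm (R x) = t * norm (V x)" using t by simp
      have "\<mu>1 * infdist x S \<le> t * norm (V x)" proof -
        have "x \<in> ball xbar \<epsilon>1" using x by simp
        from e1(3)[rule_format, OF this] show ?thesis using nR by simp
      qed
      then have "(\<mu>1 / t) * infdist x S \<le> norm (V x)" using t
        by (simp add: field_simps)
      moreover have "(\<mu>1 / t) * infdist x (S \<inter> M) \<le> (\<mu>1 / t) * infdist x S"
        using i1 e1 t by (intro mult_left_mono) auto
      moreover have "riem_grad M (\<lambda>x. g x + lam * l1norm x) x = V x" using RG x xd by simp
      ultimately show "(\<mu>1 / t) * infdist x (S \<inter> M) \<le> norm (riem_grad M (\<lambda>x. g x + lam * l1norm x) x)"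
        by simp
    qed
  next
    assume "\<exists>\<epsilon> \<mu>. \<epsilon> > 0 \<and> \<mu> > 0 \<and> (\<forall>x\<in>ball xbar \<epsilon> \<inter> M.
               \<mu> * infdist x (S \<inter> M) \<le> norm (riem_grad M (\<lambda>x. g x + lam * l1norm x) x))"
    then obtain \<epsilon>2 \<mu>2 where e2: "\<epsilon>2 > 0" "\<mu>2 > 0" "\<forall>x\<in>ball xbar \<epsilon>2 \<inter> M.
               \<mu>2 * infdist x (S \<inter> M) \<le> norm (riem_grad M (\<lambda>x. g x + lam * l1norm x) x)"
      by blast
    define C where "C = 1 + (\<bar>L\<bar> + 1/t) / \<mu>2"
    have Cp: "C > 0" using e2 t by (simp add: C_def add_pos_nonneg)
    show "\<exists>\<epsilon> \<mu>. \<epsilon> > 0 \<and> \<mu> > 0 \<and> (\<forall>x\<in>ball xbar \<epsilon>. \<mu> * infdist x S \<le> norm (R x))"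
    proof (intro exI conjI ballI)
      show "min \<epsilon>2 \<delta> > 0" using e2 \<delta> by simp
      show "1 / C > 0" using Cp by simp
      fix x assume x: "x \<in> ball xbar (min \<epsilon>2 \<delta>)"
      have xd: "x \<in> ball xbar \<delta>" using x by auto
      define y where "y = (\<chi> i. if xbar$i = 0 then 0 else x$i)"
      define w where "w = x - y"
      define Q where "Q = (\<chi> i. if xbar$i = 0 then 0 else G x $ i + lam * sgn (xbar$i))"
      have "norm (xbar - y) \<le> norm (xbar - x)"
        by (rule norm_le_componentwise_cart) (auto simp: y_def)
      then have yb: "y \<in> ball xbar (min \<epsilon>2 \<delta>)" using x by (simp add: dist_norm)
      have yM: "y \<in> M" by (simp add: y_def M_def active_subspace_def)
      have Rx: "R x = (\<chi> i. if xbar$i = 0 then x$i else t * (G x $ i + lam * sgn (xbar$i)))"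
        using Rform[OF xd] .
      have nw: "norm w \<le> norm (R x)"
        by (rule norm_le_componentwise_cart) (auto simp: w_def y_def Rx)
      have "norm (t *\<^sub>R Q) \<le> norm (R x)"
        by (rule norm_le_componentwise_cart) (auto simp: Q_def Rx)
      then have nQ: "t * norm Q \<le> norm (R x)" using t by simp
      have "norm (V y - Q) \<le> norm (G y - G x)"
        by (rule norm_le_componentwise_cart) (auto simp: Q_def V_def)
      also have "\<dots> \<le> L * norm (y - x)" using lip by blast
      also have "\<dots> \<le> \<bar>L\<bar> * norm w" by (simp add: w_def norm_minus_commute mult_right_mono)
      also have "\<dots> \<le> \<bar>L\<bar> * norm (R x)" using nw by (simp add: mult_left_mono)
      finally have nVQ: "norm (V y - Q) \<le> \<bar>L\<bar> * norm (R x)" .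
      have "norm (V y) \<le> norm Q + norm (V y - Q)" by (metis norm_triangle_sub add.commute)
      also have "\<dots> \<le> norm (R x) / t + \<bar>L\<bar> * norm (R x)" proof -
        have "norm Q \<le> norm (R x) / t" using nQ t by (simp add: pos_le_divide_eq mult.commute)
        then show ?thesis using nVQ by linarith
      qed
      finally have nV: "norm (V y) \<le> (\<bar>L\<bar> + 1/t) * norm (R x)" by (simp add: algebra_simps)
      have "\<mu>2 * infdist y (S \<inter> M) \<le> norm (riem_grad M (\<lambda>x. g x + lam * l1norm x) y)"
        using e2(3) yb yM by auto
      also have "\<dots> = norm (V y)" using RG yb yM by auto
      finally have "\<mu>2 * infdist y (S \<inter> M) \<le> (\<bar>L\<bar> + 1/t) * norm (R x)" using nV by linarith
      then have iy: "infdist y (S \<inter> M) \<le> (\<bar>L\<bar> + 1/t) / \<mu>2 * norm (R x)"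
        using e2 by (simp add: field_simps)
      have "infdist x S \<le> infdist y S + dist x y" by (rule infdist_triangle)
      also have "infdist y S \<le> infdist y (S \<inter> M)"
        by (rule infdist_mono) (use xS xM in auto)
      also have "dist x y = norm w" by (simp add: w_def dist_norm)
      finally have "infdist x S \<le> (\<bar>L\<bar> + 1/t) / \<mu>2 * norm (R x) + norm (R x)"
        using iy nw by linarith
      then have "infdist x S \<le> C * norm (R x)" by (simp add: C_def algebra_simps)
      then show "1 / C * infdist x S \<le> norm (R x)" using Cp by (simp add: field_simps)
    qed
  qed
  then show ?thesis by (simp add: R_def S_def M_def)
qed

end
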